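(* Let $m,n\ge0$, $0\le k\le\min(m,n)$, and let $i,j$ be integers with $0\le i\le m$, $0\le j\le n$, $k\le i+j\le m+n-k$. Then $$c_{m,n,k}(i,j)=\sum_{l=0}^{k}(-1)^l\binom{i+j-k}{i-l}\binom{m-i}{k-l}\binom{n-j}{l}.$$
   Context: Binomial coefficients $\binom{a}{b}$ equal $\frac{a!}{b!(a-b)!}$ when $0\le b\le a$ and $0$ otherwise. Let $e,f,h$ be the standard basis of $\mathfrak{sl}(2,\mathbb{C})$. $V(n)$ is the irreducible representation of highest weight $n$ with fixed highest weight vector $\phi_n$; $\{f^i\phi_n\}_{0\le i\le n}$ is a basis, $f^{n+1}\phi_n=0$. $\mathfrak{sl}(2)$ acts on $V(m)\otimes V(n)$ by $X(v\otimes w)=Xv\otimes w+v\otimes Xw$. For $0\le k\le\min(m,n)$, $\phi_{m,n,k}=\sum_{l=0}^{k}(-1)^l\binom{m-l}{k-l}\binom{n-k+l}{l} f^l\phi_m\otimes f^{k-l}\phi_n$ (a highest weight vector of weight $m+n-2k$). The coordinates $c_{m,n,k}(i,j)$ are defined by $f^{p-k}\phi_{m,n,k}=\sum_{i+j=p,\,0\le i\le m,\,0\le j\le n} c_{m,n,k}(i,j)\, f^i\phi_m\otimes f^j\phi_n$ for $k\le p\le m+n-k$. *)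

theory Defs
  imports Main
begin

definition binom :: "int \<Rightarrow> int \<Rightarrow> int" where
  "binom a b = (if 0 \<le> b \<and> b \<le> a then int (nat a choose nat b) else 0)"

text \<open>A vector of V(m) \<otimes> V(n) is represented by its coordinates
  c i j w.r.t. the basis f^i phi_m \<otimes> f^j phi_n (0 \<le> i \<le> m, 0 \<le> j \<le> n);
  coordinates outside that range are 0.\<close>
type_synonym coords = "nat \<Rightarrow> nat \<Rightarrow> int"

text \<open>Action of f on V(m) \<otimes> V(n):
  f(f^i phi_m \<otimes> f^j phi_n) = f^(i+1) phi_m \<otimes> f^j phi_n + f^i phi_m \<otimes> f^(j+1) phi_n,
  with f^(m+1) phi_m = 0 and f^(n+1) phi_n = 0.\<close>
definition f_act :: "nat \<Rightarrow> nat \<Rightarrow> coords \<Rightarrow> coords" where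
  "f_act m n c = (\<lambda>i j. if i \<le> m \<and> j \<le> n then
      (if 0 < i then c (i - 1) j else 0) + (if 0 < j then c i (j - 1) else 0) else 0)"

definition phi_hw :: "nat \<Rightarrow> nat \<Rightarrow> nat \<Rightarrow> coords" where
  "phi_hw m n k = (\<lambda>i j. if i \<le> k \<and> i + j = k \<and> i \<le> m \<and> j \<le> n then
      (-1) ^ i * binom (int m - int i) (int k - int i) * binom (int n - int k + int i) (int i)
    else 0)"

definition coord :: "nat \<Rightarrow> nat \<Rightarrow> nat \<Rightarrow> nat \<Rightarrow> nat \<Rightarrow> int" where
  "coord m n k i j = ((f_act m n ^^ (i + j - k)) (phi_hw m n k)) i j"

end

theory Submission
  imports Defs
begin

lemma binom_nonneg_top: "a \<ge> 0 \<Longrightarrow> binom a b = (if 0 \<le> b then int (nat a choose nat b) else 0)"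
  unfolding binom_def by (auto simp: binomial_eq_0)

lemma binom_neg2: "b < 0 \<Longrightarrow> binom a b = 0"
  unfolding binom_def by auto

lemma pascal: assumes "a \<ge> 0" shows "binom (a+1) b = binom a (b-1) + binom a b"
proof (cases "b \<ge> 1")
  case True
  have e1: "nat (a+1) = Suc (nat a)" using assms by simp
  have e2: "nat b = Suc (nat (b-1))" using True by simp
  have "int (nat (a+1) choose nat b) = int (nat a choose nat (b-1)) + int (nat a choose nat b)"
    unfolding e1 e2 by simp
  then show ?thesis using assms True by (simp add: binom_nonneg_top)
next
  case False
  then show ?thesis using assms
    by (cases "b = 0") (auto simp: binom_nonneg_top)
qed

lemma tele:
  fixes p A B i :: int and k :: nat
  assumes "p \<ge> 1" "A \<ge> 0" "B \<ge> 0"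
  shows "(\<Sum>l=0..k. (-1)^l * binom p (i - int l) * binom A (int k - int l) * binom B (int l)) =
    (\<Sum>l=0..k. (-1)^l * binom (p-1) (i - 1 - int l) * binom (A+1) (int k - int l) * binom B (int l)) +
    (\<Sum>l=0..k. (-1)^l * binom (p-1) (i - int l) * binom A (int k - int l) * binom (B+1) (int l))"
proof -
  define h where "h l = (if l = 0 then 0 else (-1)^(l-1) * binom (p-1) (i - int l) * binom A (int k - int l) * binom B (int l - 1))" for l :: nat
  have P1: "binom p (i - int l) = binom (p-1) (i - 1 - int l) + binom (p-1) (i - int l)" for l
  proof -
    have "binom ((p-1)+1) (i - int l) = binom (p-1) (i - int l - 1) + binom (p-1) (i - int l)"
      by (rule pascal) (use assms in simp)
    moreover have "i - int l - 1 = i - 1 - int l" by simp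
    ultimately show ?thesis by simp
  qed
  have P2: "binom (A+1) (int k - int l) = binom A (int k - int l - 1) + binom A (int k - int l)" for l
    by (rule pascal) (use assms in simp)
  have P3: "binom (B+1) (int l) = binom B (int l - 1) + binom B (int l)" for l
    by (rule pascal) (use assms in simp)
  have hS: "h (Suc l) = (-1)^l * binom (p-1) (i - 1 - int l) * binom A (int k - int l - 1) * binom B (int l)" for l
    unfolding h_def by (simp add: algebra_simps)
  have trm: "(-1)^l * binom p (i - int l) * binom A (int k - int l) * binom B (int l) =
     (-1)^l * binom (p-1) (i - 1 - int l) * binom (A+1) (int k - int l) * binom B (int l) +
     (-1)^l * binom (p-1) (i - int l) * binom A (int k - int l) * binom (B+1) (int l) + (h l - h (Suc l))" for l
  proof (cases l)
    case 0
    have "h 0 = 0" by (simp add: h_def)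
    moreover have "binom B (int l - 1) = 0" using 0 by (simp add: binom_neg2)
    ultimately show ?thesis unfolding hS P1 P2 P3 using 0 by (simp add: algebra_simps)
  next
    case (Suc l')
    have hl: "h l = - ((-1)^l * binom (p-1) (i - int l) * binom A (int k - int l) * binom B (int l - 1))"
      using Suc by (simp add: h_def)
    show ?thesis unfolding hl hS P1 P2 P3 by (simp add: algebra_simps)
  qed
  have "(\<Sum>l=0..k. (-1)^l * binom p (i - int l) * binom A (int k - int l) * binom B (int l)) =
    (\<Sum>l=0..k. (-1)^l * binom (p-1) (i - 1 - int l) * binom (A+1) (int k - int l) * binom B (int l)) +
    (\<Sum>l=0..k. (-1)^l * binom (p-1) (i - int l) * binom A (int k - int l) * binom (B+1) (int l)) +
    (\<Sum>l=0..k. h l - h (Suc l))"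
    by (subst trm) (simp add: sum.distrib)
  moreover have "(\<Sum>l=0..k. h l - h (Suc l)) = 0"
  proof -
    have "(\<Sum>l=0..k. h l - h (Suc l)) = - (\<Sum>l<Suc k. h (Suc l) - h l)"
      by (simp add: atLeast0AtMost lessThan_Suc_atMost sum_negf[symmetric])
    also have "\<dots> = - (h (Suc k) - h 0)" by (simp add: sum_lessThan_telescope)
    also have "\<dots> = 0" by (simp add: h_def binom_neg2)
    finally show ?thesis .
  qed
  ultimately show ?thesis by simp
qed


definition R :: "nat \<Rightarrow> nat \<Rightarrow> nat \<Rightarrow> nat \<Rightarrow> nat \<Rightarrow> int" where
  "R m n k i j = (\<Sum>l = 0..k. (-1) ^ l * binom (int i + int j - int k) (int i - int l)
                 * binom (int m - int i) (int k - int l) * binom (int n - int j) (int l))"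

lemma binom_zero_top: "binom 0 b = (if b = 0 then 1 else 0)"
  unfolding binom_def by auto

lemma R_base:
  assumes "i + j = k" "i \<le> m" "j \<le> n"
  shows "R m n k i j = (-1) ^ i * binom (int m - int i) (int k - int i) * binom (int n - int k + int i) (int i)"
proof -
  have "R m n k i j = (\<Sum>l = 0..k. if l = i then (-1) ^ i * binom (int m - int i) (int k - int i) * binom (int n - int k + int i) (int i) else 0)"
    unfolding R_def using assms by (intro sum.cong) (auto simp: binom_zero_top)
  also have "\<dots> = (-1) ^ i * binom (int m - int i) (int k - int i) * binom (int n - int k + int i) (int i)"
    using assms by simp
  finally show ?thesis .
qed

lemma R_i0:
  assumes "k \<le> j" "j \<le> n"
  shows "R m n k 0 j = binom (int m) (int k)"
proof -
  have "R m n k 0 j = (\<Sum>l = 0..k. if l = 0 then binom (int m) (int k) else 0)"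
    unfolding R_def using assms by (intro sum.cong) (auto simp: binom_def)
  then show ?thesis by simp
qed

lemma R_j0:
  assumes "k \<le> i" "i \<le> m"
  shows "R m n k i 0 = (-1)^k * binom (int n) (int k)"
proof -
  have "R m n k i 0 = (\<Sum>l = 0..k. if l = k then (-1)^k * binom (int n) (int k) else 0)"
    unfolding R_def using assms by (intro sum.cong) (auto simp: binom_def)
  then show ?thesis by simp
qed

lemma R_step:
  assumes "i \<le> m" "j \<le> n" "k < i + j"
  shows "R m n k i j = (if 0 < i then R m n k (i-1) j else 0) + (if 0 < j then R m n k i (j-1) else 0)"
proof (cases "i = 0")
  case True
  then show ?thesis using assms R_i0[of k j n m] R_i0[of k "j-1" n m] by auto
next
  case False
  note i0 = False
  show ?thesis
  proof (cases "j = 0")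
    case True
    then show ?thesis using assms i0 R_j0[of k i m n] R_j0[of k "i-1" m n] by auto
  next
    case False
    have t: "R m n k i j = R m n k (i-1) j + R m n k i (j-1)"
      unfolding R_def
      using tele[where p="int i + int j - int k" and A="int m - int i" and B="int n - int j" and k=k and i="int i"] assms i0 False
      by (simp add: of_nat_diff algebra_simps)
    then show ?thesis using i0 False by simp
  qed
qed

lemma main:
  "((f_act m n ^^ p) (phi_hw m n k)) i j = (if i \<le> m \<and> j \<le> n \<and> i + j = k + p then R m n k i j else 0)"
proof (induction p arbitrary: i j)
  case 0
  then show ?case by (auto simp: phi_hw_def R_base)
next
  case (Suc p)
  show ?case
  proof (cases "i \<le> m \<and> j \<le> n")
    case True
    have "((f_act m n ^^ Suc p) (phi_hw m n k)) i j =
       (if 0 < i then ((f_act m n ^^ p) (phi_hw m n k)) (i-1) j else 0) +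
       (if 0 < j then ((f_act m n ^^ p) (phi_hw m n k)) i (j-1) else 0)"
      using True by (simp add: f_act_def)
    also have "\<dots> = (if i + j = k + Suc p then R m n k i j else 0)"
    proof (cases "i + j = k + Suc p")
      case True2: True
      then show ?thesis using True R_step[of i m j n k] by (auto simp: Suc.IH)
    next
      case False
      then show ?thesis using True by (auto simp: Suc.IH)
    qed
    finally show ?thesis using True by simp
  next
    case False
    then show ?thesis by (auto simp: f_act_def)
  qed
qed

theorem proposition9p2:
  fixes m n k i j :: nat
  assumes "k \<le> min m n" and "i \<le> m" and "j \<le> n"
    and "k \<le> i + j" and "i + j \<le> m + n - k"
  shows "coord m n k i j =
    (\<Sum>l = 0..k. (-1) ^ l * binom (int i + int j - int k) (int i - int l)
                 * binom (int m - int i) (int k - int l) * binom (int n - int j) (int l))"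
  unfolding coord_def main using assms by (simp add: R_def)

end
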